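(* Let $G=(V,E)$ be a finite graph, $q\in\mathbb N$, $\beta\ge0$, and let $P_G$ be the transition matrix of the Swendsen--Wang dynamics for the $q$-state Potts model on $G$ at inverse temperature $\beta$. Let $\sigma,\tau\in\{1,\dots,q\}^V$, $v\in V$ and $k,l\in\{1,\dots,q\}$. Then \[ P_G(\sigma^{v,k},\tau^{v,l})\;\le\;a_3^{\deg_G(v)}\,P_G(\sigma,\tau),\qquad a_3=a_3(\beta,q)=q\,e^{2\beta}-(q-1)e^{\beta}. \]
   Context: Graphs are finite, parallel edges and loops allowed; $\deg_G(v)$ is the number of edges having $v$ as an endvertex. For $\sigma\in\{1,\dots,q\}^V$, $v\in V$, $k\in\{1,\dots,q\}$, $\sigma^{v,k}$ is the configuration equal to $\sigma$ off $v$ and equal to $k$ at $v$. For $A\subseteq E$, $c(A)$ is the number of connected components of $(V,A)$; $E(\sigma)$ is the set of edges whose endvertices have the same color in $\sigma$. With $p=1-e^{-\beta}$, $P_G(\sigma,\tau)=(1-p)^{|E(\sigma)|}\sum_{A\subseteq E(\sigma)\cap E(\tau)}\bigl(\tfrac{p}{1-p}\bigr)^{|A|}q^{-c(A)}$. *)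

theory Defs
  imports Complex_Main
begin

text \<open>A finite multigraph (parallel edges and loops allowed): a finite vertex set V,
a finite set of edge identifiers E, and an endpoint map assigning each edge its
(unordered) pair of endvertices, given as an ordered pair.\<close>

definition multigraph :: "'v set \<Rightarrow> 'e set \<Rightarrow> ('e \<Rightarrow> 'v \<times> 'v) \<Rightarrow> bool" where
  "multigraph V E ends \<longleftrightarrow> finite V \<and> finite E \<and>
     (\<forall>e\<in>E. fst (ends e) \<in> V \<and> snd (ends e) \<in> V)"

definition deg :: "'e set \<Rightarrow> ('e \<Rightarrow> 'v \<times> 'v) \<Rightarrow> 'v \<Rightarrow> nat" where
  "deg E ends v = card {e\<in>E. fst (ends e) = v \<or> snd (ends e) = v}"

definition conn_rel :: "'v set \<Rightarrow> ('e \<Rightarrow> 'v \<times> 'v) \<Rightarrow> 'e set \<Rightarrow> ('v \<times> 'v) set" where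
  "conn_rel V ends A =
     ({(x,y). \<exists>e\<in>A. ends e = (x,y) \<or> ends e = (y,x)}\<^sup>*) \<inter> (V \<times> V)"

definition ncomp :: "'v set \<Rightarrow> ('e \<Rightarrow> 'v \<times> 'v) \<Rightarrow> 'e set \<Rightarrow> nat" where
  "ncomp V ends A = card (V // conn_rel V ends A)"

definition mono_edges :: "'e set \<Rightarrow> ('e \<Rightarrow> 'v \<times> 'v) \<Rightarrow> ('v \<Rightarrow> nat) \<Rightarrow> 'e set" where
  "mono_edges E ends \<sigma> = {e\<in>E. \<sigma> (fst (ends e)) = \<sigma> (snd (ends e))}"

definition SW :: "'v set \<Rightarrow> 'e set \<Rightarrow> ('e \<Rightarrow> 'v \<times> 'v) \<Rightarrow> nat \<Rightarrow> real
                  \<Rightarrow> ('v \<Rightarrow> nat) \<Rightarrow> ('v \<Rightarrow> nat) \<Rightarrow> real" where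
  "SW V E ends q \<beta> \<sigma> \<tau> =
     (let p = 1 - exp (- \<beta>) in
      (1 - p) ^ card (mono_edges E ends \<sigma>) *
      (\<Sum>A\<in>Pow (mono_edges E ends \<sigma> \<inter> mono_edges E ends \<tau>).
          (p / (1 - p)) ^ card A * (1 / real q) ^ ncomp V ends A))"

definition config :: "'v set \<Rightarrow> nat \<Rightarrow> ('v \<Rightarrow> nat) \<Rightarrow> bool" where
  "config V q \<sigma> \<longleftrightarrow> (\<forall>v\<in>V. \<sigma> v \<in> {1..q})"

end

theory Submission
  imports Defs
begin

definition edge_rel :: "('e \<Rightarrow> 'v \<times> 'v) \<Rightarrow> 'e set \<Rightarrow> ('v \<times> 'v) set" where
  "edge_rel ends A = {(x,y). \<exists>e\<in>A. ends e = (x,y) \<or> ends e = (y,x)}"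

lemma conn_rel_alt: "conn_rel V ends A = (edge_rel ends A)\<^sup>* \<inter> (V \<times> V)"
  unfolding conn_rel_def edge_rel_def by simp

lemma sym_edge_rel: "sym (edge_rel ends A)"
  unfolding edge_rel_def sym_def by auto

lemma conn_equiv: "equiv V (conn_rel V ends A)"
proof -
  have s: "sym ((edge_rel ends A)\<^sup>*)" by (rule sym_rtrancl[OF sym_edge_rel])
  show ?thesis unfolding conn_rel_alt equiv_def refl_on_def sym_def trans_def
    using s unfolding sym_def by (auto intro: rtrancl_trans)
qed

lemma edge_rel_insert: "ends e = (x,y) \<Longrightarrow> edge_rel ends (insert e A) = edge_rel ends A \<union> {(x,y),(y,x)}"
  unfolding edge_rel_def by auto

lemma rtrancl_add_edge:
  assumes "(a,b) \<in> (S \<union> {(x,y),(y,x)})\<^sup>*"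
  shows "(a,b)\<in>S\<^sup>* \<or> ((a,x)\<in>S\<^sup>* \<and> (y,b)\<in>S\<^sup>*) \<or> ((a,y)\<in>S\<^sup>* \<and> (x,b)\<in>S\<^sup>*)"
  using assms
proof (induction rule: rtrancl_induct)
  case base
  then show ?case by simp
next
  case (step b c)
  then show ?case by (auto intro: rtrancl_into_rtrancl)
qed

lemma ncomp_insert:
  assumes fin: "finite V" and xV: "fst (ends e) \<in> V" and yV: "snd (ends e) \<in> V"
  shows "ncomp V ends A \<le> ncomp V ends (insert e A) + 1"
proof -
  obtain x y where xy: "ends e = (x,y)" by (cases "ends e") auto
  have x: "x \<in> V" and y: "y \<in> V" using xV yV xy by auto
  define R where "R = conn_rel V ends A"
  define R' where "R' = conn_rel V ends (insert e A)"
  have eR: "equiv V R" unfolding R_def by (rule conn_equiv)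
  have eR': "equiv V R'" unfolding R'_def by (rule conn_equiv)
  have sub: "R \<subseteq> R'" unfolding R_def R'_def conn_rel_alt edge_rel_insert[of ends e x y A, OF xy]
    by (auto intro: rtrancl_mono[THEN subsetD])
  have chr: "(a,b)\<in>R \<or> ((a,x)\<in>R \<and> (y,b)\<in>R) \<or> ((a,y)\<in>R \<and> (x,b)\<in>R)"
    if "(a,b) \<in> R'" for a b
    using that rtrancl_add_edge[of a b "edge_rel ends A" x y] x y
    unfolding R_def R'_def conn_rel_alt edge_rel_insert[of ends e x y A, OF xy] by auto
  have img: "R' `` (R `` {a}) = R' `` {a}" if "a \<in> V" for a
  proof
    show "R' `` (R `` {a}) \<subseteq> R' `` {a}"
      using sub eR' unfolding equiv_def trans_def by blast
    show "R' `` {a} \<subseteq> R' `` (R `` {a})"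
      using eR that unfolding equiv_def refl_on_def by blast
  qed
  define Cx where "Cx = R `` {x}"
  have inj: "inj_on (\<lambda>C. R' `` C) (V//R - {Cx})"
  proof (rule inj_onI)
    fix C1 C2 assume C1: "C1 \<in> V//R - {Cx}" and C2: "C2 \<in> V//R - {Cx}"
      and eq: "R' `` C1 = R' `` C2"
    obtain a1 where a1: "a1 \<in> V" "C1 = R `` {a1}" using C1 by (auto elim: quotientE)
    obtain a2 where a2: "a2 \<in> V" "C2 = R `` {a2}" using C2 by (auto elim: quotientE)
    have "R' `` {a1} = R' `` {a2}" using eq img a1 a2 by simp
    then have "(a1,a2) \<in> R'" using eq_equiv_class_iff[OF eR' a1(1) a2(1)] by simp
    then have "(a1,a2)\<in>R \<or> ((a1,x)\<in>R \<and> (y,a2)\<in>R) \<or> ((a1,y)\<in>R \<and> (x,a2)\<in>R)"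
      by (rule chr)
    moreover have "(a1,x) \<notin> R"
      using C1 a1 eq_equiv_class_iff[OF eR a1(1) x] unfolding Cx_def by auto
    moreover have "(x,a2) \<notin> R"
      using C2 a2 eq_equiv_class_iff[OF eR x a2(1)] unfolding Cx_def by auto
    ultimately have "(a1,a2) \<in> R" by blast
    then show "C1 = C2" using a1 a2 eq_equiv_class_iff[OF eR a1(1) a2(1)] by simp
  qed
  have into: "(\<lambda>C. R' `` C) ` (V//R - {Cx}) \<subseteq> V//R'"
  proof
    fix D assume "D \<in> (\<lambda>C. R' `` C) ` (V//R - {Cx})"
    then obtain C where C: "C \<in> V//R" "D = R' `` C" by auto
    obtain a where a: "a \<in> V" "C = R `` {a}" using C(1) by (auto elim: quotientE)
    show "D \<in> V//R'" using C a img quotientI by metis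
  qed
  have fq: "finite (V//R')" using fin eR' by (simp add: finite_quotient equiv_def)
  have fq1: "finite (V//R)" using fin eR by (simp add: finite_quotient equiv_def)
  have "card (V//R - {Cx}) \<le> card (V//R')"
    using card_inj_on_le[OF inj into fq] .
  moreover have "card (V//R) \<le> card (V//R - {Cx}) + 1"
    using fq1 by (simp add: card_Diff_singleton_if) arith
  ultimately show ?thesis unfolding ncomp_def R_def R'_def by simp
qed


definition Zf :: "'v set \<Rightarrow> ('e \<Rightarrow> 'v \<times> 'v) \<Rightarrow> nat \<Rightarrow> real \<Rightarrow> 'e set \<Rightarrow> real" where
  "Zf V ends q w F = (\<Sum>A\<in>Pow F. w ^ card A * (1 / real q) ^ ncomp V ends A)"

lemma Z_nonneg: "w \<ge> 0 \<Longrightarrow> 0 \<le> Zf V ends q w F"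
  unfolding Zf_def by (intro sum_nonneg) auto

lemma Z_mono: "finite G \<Longrightarrow> F \<subseteq> G \<Longrightarrow> w \<ge> 0 \<Longrightarrow> Zf V ends q w F \<le> Zf V ends q w G"
  unfolding Zf_def by (intro sum_mono2) auto

lemma pow_aux:
  fixes q :: real
  assumes "q \<ge> 1" "c \<le> c' + 1"
  shows "(1/q)^c' \<le> q * (1/q)^c"
proof (cases c)
  case 0
  have "(1/q)^c' \<le> 1" using assms by (intro power_le_one) auto
  then show ?thesis using 0 assms by simp
next
  case (Suc m)
  have "(1/q)^c' \<le> (1/q)^m" using assms Suc by (intro power_decreasing) auto
  then show ?thesis using Suc assms by simp
qed

lemma Z_insert:
  assumes mg: "multigraph V E ends" and FE: "F \<subseteq> E" and eE: "e \<in> E" and eF: "e \<notin> F"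
    and w: "w \<ge> 0" and q: "q \<ge> 1"
  shows "Zf V ends q w (insert e F) \<le> (1 + real q * w) * Zf V ends q w F"
proof -
  have finE: "finite E" and finV: "finite V" and ev: "fst (ends e) \<in> V" "snd (ends e) \<in> V"
    using mg eE unfolding multigraph_def by auto
  have finF: "finite F" using finite_subset[OF FE finE] .
  define t where "t A = w ^ card A * (1 / real q) ^ ncomp V ends A" for A
  have disj: "Pow F \<inter> insert e ` Pow F = {}" using eF by auto
  have inj: "inj_on (insert e) (Pow F)"
    by (rule inj_onI) (use eF in \<open>auto simp: insert_ident\<close>)
  have "Zf V ends q w (insert e F) = sum t (Pow F) + sum t (insert e ` Pow F)"
    unfolding Zf_def t_def[symmetric] Pow_insert
    by (rule sum.union_disjoint) (use finF disj in auto)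
  also have "sum t (insert e ` Pow F) = (\<Sum>A\<in>Pow F. t (insert e A))"
    by (rule sum.reindex[OF inj, unfolded comp_def])
  also have "\<dots> \<le> (\<Sum>A\<in>Pow F. real q * w * t A)"
  proof (rule sum_mono)
    fix A assume A: "A \<in> Pow F"
    then have fA: "finite A" and eA: "e \<notin> A" using finF eF finite_subset by auto
    have c: "ncomp V ends A \<le> ncomp V ends (insert e A) + 1"
      by (rule ncomp_insert[of V ends e A, OF finV ev])
    have p: "(1 / real q) ^ ncomp V ends (insert e A) \<le> real q * (1 / real q) ^ ncomp V ends A"
      by (rule pow_aux) (use q c in auto)
    have "t (insert e A) = w * w ^ card A * (1 / real q) ^ ncomp V ends (insert e A)"
      unfolding t_def using fA eA by simp
    also have "\<dots> \<le> w * w ^ card A * (real q * (1 / real q) ^ ncomp V ends A)"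
      using p w by (intro mult_left_mono) auto
    also have "\<dots> = real q * w * t A" unfolding t_def by (simp add: algebra_simps)
    finally show "t (insert e A) \<le> real q * w * t A" .
  qed
  also have "\<dots> = real q * w * sum t (Pow F)" by (simp add: sum_distrib_left)
  finally show ?thesis unfolding Zf_def t_def[symmetric] by (simp add: algebra_simps)
qed

lemma Z_union:
  assumes mg: "multigraph V E ends" and FE: "F \<subseteq> E" and DE: "D \<subseteq> E"
    and w: "w \<ge> 0" and q: "q \<ge> 1"
  shows "Zf V ends q w (F \<union> D) \<le> (1 + real q * w) ^ card D * Zf V ends q w F"
proof -
  have finE: "finite E" using mg unfolding multigraph_def by auto
  have finD: "finite D" using finite_subset[OF DE finE] .
  from finD DE show ?thesis
  proof (induction D rule: finite_induct)
    case empty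
    then show ?case by simp
  next
    case (insert d D)
    have IH: "Zf V ends q w (F \<union> D) \<le> (1 + real q * w) ^ card D * Zf V ends q w F"
      using insert by auto
    have b1: "1 \<le> 1 + real q * w" using w by simp
    have z0: "0 \<le> Zf V ends q w F" using Z_nonneg w by blast
    show ?case
    proof (cases "d \<in> F \<union> D")
      case True
      then have "F \<union> insert d D = F \<union> D" by auto
      then have "Zf V ends q w (F \<union> insert d D) \<le> (1 + real q * w) ^ card D * Zf V ends q w F"
        using IH by simp
      also have "\<dots> \<le> (1 + real q * w) * ((1 + real q * w) ^ card D * Zf V ends q w F)"
        using mult_right_mono[OF b1, of "(1 + real q * w) ^ card D * Zf V ends q w F"] z0 w by simp
      finally show ?thesis using insert by simp
    next
      case False
      have "Zf V ends q w (F \<union> insert d D) = Zf V ends q w (insert d (F \<union> D))" by simp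
      also have "\<dots> \<le> (1 + real q * w) * Zf V ends q w (F \<union> D)"
        by (rule Z_insert[OF mg]) (use insert FE False w q in auto)
      also have "\<dots> \<le> (1 + real q * w) * ((1 + real q * w) ^ card D * Zf V ends q w F)"
        using IH b1 by (intro mult_left_mono) auto
      finally show ?thesis using insert by simp
    qed
  qed
qed


lemma SW_alt: "SW V E ends q \<beta> \<sigma> \<tau> = exp (- \<beta>) ^ card (mono_edges E ends \<sigma>) *
   Zf V ends q (exp \<beta> - 1) (mono_edges E ends \<sigma> \<inter> mono_edges E ends \<tau>)"
proof -
  have "(1 - exp (- \<beta>)) / (1 - (1 - exp (- \<beta>))) = exp \<beta> - 1"
    by (simp add: exp_minus field_simps)
  then show ?thesis unfolding SW_def Zf_def Let_def by simp
qed

theorem lemma3p8: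
  fixes V :: "'v set" and E :: "'e set" and ends :: "'e \<Rightarrow> 'v \<times> 'v"
    and q :: nat and \<beta> :: real and \<sigma> \<tau> :: "'v \<Rightarrow> nat" and v :: 'v and k l :: nat
  assumes "multigraph V E ends"
    and "\<beta> \<ge> 0"
    and "config V q \<sigma>" and "config V q \<tau>"
    and "v \<in> V" and "k \<in> {1..q}" and "l \<in> {1..q}"
  shows "SW V E ends q \<beta> (\<sigma>(v := k)) (\<tau>(v := l))
         \<le> (real q * exp (2 * \<beta>) - (real q - 1) * exp \<beta>) ^ deg E ends v
            * SW V E ends q \<beta> \<sigma> \<tau>"
proof -
  note mg = assms(1)
  have q1: "q \<ge> 1" using assms(6) by auto
  define w where "w = exp \<beta> - 1"
  have w0: "w \<ge> 0" using assms(2) unfolding w_def by simp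
  define D where "D = {e\<in>E. fst (ends e) = v \<or> snd (ends e) = v}"
  have degD: "deg E ends v = card D" unfolding deg_def D_def ..
  have finE: "finite E" using mg unfolding multigraph_def by auto
  define Ms where "Ms = mono_edges E ends \<sigma>"
  define Mt where "Mt = mono_edges E ends \<tau>"
  define Ms' where "Ms' = mono_edges E ends (\<sigma>(v:=k))"
  define Mt' where "Mt' = mono_edges E ends (\<tau>(v:=l))"
  define F where "F = Ms \<inter> Mt"
  define F' where "F' = Ms' \<inter> Mt'"
  have DE: "D \<subseteq> E" unfolding D_def by auto
  have FE: "F \<subseteq> E" unfolding F_def Ms_def mono_edges_def by auto
  have h1: "F' \<subseteq> (F - D) \<union> D"
    unfolding F'_def F_def Ms_def Mt_def Ms'_def Mt'_def mono_edges_def D_def by auto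
  have h2: "Ms \<subseteq> Ms' \<union> D"
    unfolding Ms_def Ms'_def mono_edges_def D_def by auto
  have finMs': "finite Ms'" unfolding Ms'_def mono_edges_def using finE by simp
  have finD: "finite D" using finite_subset[OF DE finE] .
  have cardM: "card Ms \<le> card Ms' + card D"
    using card_mono[OF _ h2] card_Un_le[of Ms' D] finMs' finD by simp
  define a where "a = 1 + real q * w"
  have a1: "a \<ge> 1" unfolding a_def using w0 by simp
  have "Zf V ends q w F' \<le> Zf V ends q w ((F - D) \<union> D)"
    by (rule Z_mono[OF _ h1 w0]) (use finite_subset[OF FE finE] finD in auto)
  also have "\<dots> \<le> a ^ card D * Zf V ends q w (F - D)"
    unfolding a_def by (rule Z_union[OF mg _ DE w0 q1]) (use FE in auto)
  also have "\<dots> \<le> a ^ card D * Zf V ends q w F"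
    using a1 by (intro mult_left_mono Z_mono) (use finite_subset[OF FE finE] w0 in auto)
  finally have Zb: "Zf V ends q w F' \<le> a ^ card D * Zf V ends q w F" .
  have ex: "exp (- \<beta>) ^ card Ms' \<le> exp \<beta> ^ card D * exp (- \<beta>) ^ card Ms"
  proof -
    have "exp (- \<beta>) ^ card Ms' = exp (- (\<beta> * card Ms'))"
      by (simp add: exp_of_nat_mult[symmetric] mult.commute)
    also have "\<dots> \<le> exp (\<beta> * card D - \<beta> * card Ms)"
    proof -
      have "real (card Ms) \<le> real (card Ms') + real (card D)" using cardM by linarith
      then have "\<beta> * card Ms \<le> \<beta> * card Ms' + \<beta> * card D"
        using assms(2) by (metis distrib_left mult_left_mono)
      then show ?thesis by simp
    qed
    also have "\<dots> = exp \<beta> ^ card D * exp (- \<beta>) ^ card Ms"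
      by (simp add: exp_diff exp_minus exp_of_nat_mult[symmetric] mult.commute divide_inverse power_inverse)
    finally show ?thesis .
  qed
  have "SW V E ends q \<beta> (\<sigma>(v := k)) (\<tau>(v := l)) = exp (- \<beta>) ^ card Ms' * Zf V ends q w F'"
    unfolding SW_alt w_def F'_def Ms'_def Mt'_def ..
  also have "\<dots> \<le> (exp \<beta> ^ card D * exp (- \<beta>) ^ card Ms) * (a ^ card D * Zf V ends q w F)"
    by (rule mult_mono[OF ex Zb]) (use Z_nonneg[OF w0] in auto)
  also have "\<dots> = (exp \<beta> * a) ^ card D * (exp (- \<beta>) ^ card Ms * Zf V ends q w F)"
    by (simp add: power_mult_distrib algebra_simps)
  also have "exp \<beta> * a = real q * exp (2 * \<beta>) - (real q - 1) * exp \<beta>"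
    unfolding a_def w_def by (simp add: algebra_simps mult_exp_exp)
  also have "exp (- \<beta>) ^ card Ms * Zf V ends q w F = SW V E ends q \<beta> \<sigma> \<tau>"
    unfolding SW_alt w_def F_def Ms_def Mt_def ..
  finally show ?thesis unfolding degD .
qed

end
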